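(* Let $T\subset\mathbb{R}^3$ be a nondegenerate tetrahedron with vertices $\mathbf v_1,\dots,\mathbf v_4$ and faces $F_j$ opposite $\mathbf v_j$; let $\mathcal I_j(p)=\frac1{|F_j|}\int_{F_j}p\,d\mathbf x$, $j=1,\dots,4$. For $1\le i<j\le4$ let $x_{ij}(t)=(1-t)\mathbf v_i+t\mathbf v_j$, $t\in[0,1]$, let $\omega_{ij}$ be a probability density on $[0,1]$, and let $q_{ij}$ be a polynomial of degree at most 2 on $[0,1]$ with $\int_0^1 q_{ij}(t)\phi(t)\omega_{ij}(t)\,dt=0$ for every affine $\phi$. Define $\mathcal L_{ij}(p)=\int_0^1p(x_{ij}(t))\,q_{ij}(t)\,\omega_{ij}(t)\,dt$ for $p\in\mathbb{P}_2(T)$, and $\Sigma^{\mathrm{ef}}=\{\mathcal I_j:j=1,\dots,4\}\cup\{\mathcal L_{ij}:1\le i<j\le4\}$. Then the triple $(T,\mathbb{P}_2(T),\Sigma^{\mathrm{ef}})$ is unisolvent if and only if $\int_0^1t(1-t)\,q_{ij}(t)\,\omega_{ij}(t)\,dt\ne0$ for all $1\le i<j\le4$.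
   Context: $|F_j|$ is the area of $F_j$; $\mathbb{P}_2(T)$ is the space of polynomials of degree at most 2 on $T$. Unisolvent means the only $p\in\mathbb{P}_2(T)$ annihilated by all ten functionals of $\Sigma^{\mathrm{ef}}$ is $p=0$. *)

theory Defs
  imports "HOL-Analysis.Analysis" "HOL-Computational_Algebra.Polynomial"
begin

definition P2 :: "(real^3 \<Rightarrow> real) set" where
  "P2 = {p. \<exists>c (b::real^3) (A::real^3^3).
            \<forall>x. p x = c + (\<Sum>k\<in>UNIV. b$k * x$k) + (\<Sum>k\<in>UNIV. \<Sum>l\<in>UNIV. A$k$l * x$k * x$l)}"

definition ref_triangle :: "(real^2) set" where
  "ref_triangle = {y. 0 \<le> y$1 \<and> 0 \<le> y$2 \<and> y$1 + y$2 \<le> 1}"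

text \<open>Mean value of p over the triangle with vertices a b c:
  (1/|F|) \<integral>_F p, computed via the affine parametrization (the Jacobian factor
  cancels against the area, leaving 2 = 1/|ref_triangle|).\<close>
definition triangle_mean :: "(real^3 \<Rightarrow> real) \<Rightarrow> real^3 \<Rightarrow> real^3 \<Rightarrow> real^3 \<Rightarrow> real" where
  "triangle_mean p a b c =
     2 * integral ref_triangle (\<lambda>y. p (a + (y$1) *\<^sub>R (b - a) + (y$2) *\<^sub>R (c - a)))"

definition face_mean :: "(nat \<Rightarrow> real^3) \<Rightarrow> nat \<Rightarrow> (real^3 \<Rightarrow> real) \<Rightarrow> real" where
  "face_mean v j p =
     (let ids = sorted_list_of_set ({1..4::nat} - {j})
      in triangle_mean p (v (ids!0)) (v (ids!1)) (v (ids!2)))"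

definition edge_fun :: "(nat \<Rightarrow> real^3) \<Rightarrow> (real \<Rightarrow> real) \<Rightarrow> real poly \<Rightarrow> nat \<Rightarrow> nat
                         \<Rightarrow> (real^3 \<Rightarrow> real) \<Rightarrow> real" where
  "edge_fun v \<omega> q i j p =
     integral {0..1} (\<lambda>t. p ((1 - t) *\<^sub>R v i + t *\<^sub>R v j) * poly q t * \<omega> t)"

definition unisolvent_ef ::
  "(nat \<Rightarrow> real^3) \<Rightarrow> (nat \<Rightarrow> nat \<Rightarrow> real \<Rightarrow> real) \<Rightarrow> (nat \<Rightarrow> nat \<Rightarrow> real poly) \<Rightarrow> bool" where
  "unisolvent_ef v \<omega> q \<longleftrightarrow>
     (\<forall>p\<in>P2.
        (\<forall>j\<in>{1..4}. face_mean v j p = 0) \<and>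
        (\<forall>i j. 1 \<le> i \<and> i < j \<and> j \<le> 4 \<longrightarrow> edge_fun v (\<omega> i j) (q i j) i j p = 0)
        \<longrightarrow> (\<forall>x\<in>convex hull (v ` {1..4}). p x = 0))"

end

theory Submission
  imports Defs
begin


lemma absint_compact:
  fixes f :: "'a::euclidean_space \<Rightarrow> 'b::euclidean_space"
  assumes "compact S" "continuous_on S f"
  shows "f absolutely_integrable_on S"
proof -
  have "integrable lborel (\<lambda>x. indicator S x *\<^sub>R f x)"
    using borel_integrable_compact[OF assms] .
  moreover have "(\<lambda>x. indicator S x *\<^sub>R f x) \<in> borel_measurable lborel"
    using assms by (auto intro!: borel_measurable_continuous_on_indicator borel_compact)
  ultimately show ?thesis
    unfolding set_integrable_def
    by (simp add: integrable_completion)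
qed

lemma compact_T: "compact ref_triangle"
proof -
  have "ref_triangle \<subseteq> cbox 0 1"
  proof
    fix x assume "x \<in> ref_triangle"
    then show "x \<in> cbox 0 1" unfolding mem_box_cart
    proof (intro allI)
      fix i show "0 $ i \<le> x $ i \<and> x $ i \<le> 1 $ i"
        using exhaust_2[of i] \<open>x \<in> ref_triangle\<close> by (auto simp: ref_triangle_def)
    qed
  qed
  hence "bounded ref_triangle" by (meson bounded_cbox bounded_subset)
  moreover have "closed ref_triangle"
    unfolding ref_triangle_def
    by (intro closed_Collect_conj closed_Collect_le continuous_intros)
  ultimately show ?thesis using compact_eq_bounded_closed by blast
qed

lemma int_T: "continuous_on ref_triangle f \<Longrightarrow> (f::real^2\<Rightarrow>real) integrable_on ref_triangle"
  using absint_compact[OF compact_T] set_lebesgue_integral_eq_integral(1) by blast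

lemma cov_T:
  fixes g L :: "real^2 \<Rightarrow> real^2" and f :: "real^2 \<Rightarrow> real"
  assumes der: "\<And>x. (g has_derivative L) (at x)" and dt: "\<bar>det (matrix L)\<bar> = 1"
    and inv: "\<And>x. x \<in> ref_triangle \<Longrightarrow> g (g x) = x" and im: "g ` ref_triangle = ref_triangle"
    and cf: "continuous_on ref_triangle f"
  shows "integral ref_triangle (\<lambda>x. f (g x)) = integral ref_triangle f"
proof -
  define F where "F = (\<lambda>x. f x *\<^sub>R (axis 1 1 :: real^1))"
  have cg: "continuous_on ref_triangle g"
    using der has_derivative_continuous continuous_at_imp_continuous_on by blast
  have aF: "F absolutely_integrable_on ref_triangle"
    unfolding F_def by (intro absint_compact compact_T continuous_intros cf)
  have "(\<lambda>x. \<bar>det (matrix L)\<bar> *\<^sub>R F (g x)) absolutely_integrable_on ref_triangle \<and>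
        integral ref_triangle (\<lambda>x. \<bar>det (matrix L)\<bar> *\<^sub>R F (g x)) = integral ref_triangle F"
    using has_absolute_integral_change_of_variables_invertible[of ref_triangle g "\<lambda>_. L" g F "integral ref_triangle F"]
      der has_derivative_at_withinI inv cg aF im by (auto intro: has_derivative_subset)
  hence 1: "(\<lambda>x. F (g x)) integrable_on ref_triangle" "integral ref_triangle (\<lambda>x. F (g x)) = integral ref_triangle F"
    using dt set_lebesgue_integral_eq_integral(1) by auto
  have 2: "F integrable_on ref_triangle" using aF set_lebesgue_integral_eq_integral(1) by blast
  have "integral ref_triangle (\<lambda>x. F (g x) \<bullet> axis 1 1) = integral ref_triangle (\<lambda>x. F x \<bullet> axis 1 1)"
    using integral_component_eq[OF 1(1)] integral_component_eq[OF 2] 1(2) by simp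
  thus ?thesis by (simp add: F_def inner_axis_axis)
qed

definition swp :: "real^2 \<Rightarrow> real^2" where "swp x = (\<chi> i. if i = 1 then x$2 else x$1)"
definition shL :: "real^2 \<Rightarrow> real^2" where "shL x = (\<chi> i. if i = 1 then - x$1 - x$2 else x$2)"
definition shg :: "real^2 \<Rightarrow> real^2" where "shg x = (\<chi> i. if i = 1 then 1 else 0) + shL x"

lemma lin_swp: "linear swp"
  by (rule linearI) (auto simp: swp_def vec_eq_iff)
lemma lin_shL: "linear shL"
  by (rule linearI) (auto simp: shL_def vec_eq_iff algebra_simps)

lemma det_swp: "\<bar>det (matrix swp)\<bar> = 1"
  by (simp add: det_2 matrix_def swp_def axis_def)
lemma det_shL: "\<bar>det (matrix shL)\<bar> = 1"
  by (simp add: det_2 matrix_def shL_def axis_def)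

lemma swp_inv: "swp (swp x) = x"
  by (auto simp: swp_def vec_eq_iff) (metis exhaust_2)
lemma shg_inv: "shg (shg x) = x"
  by (auto simp: shg_def shL_def vec_eq_iff) (metis exhaust_2)

lemma swp_im: "swp ` ref_triangle = ref_triangle"
proof -
  have "swp ` ref_triangle \<subseteq> ref_triangle" for dummy::bool
    by (auto simp: swp_def ref_triangle_def)
  moreover have "x \<in> swp ` ref_triangle" if "x \<in> ref_triangle" for x
    using that by (intro image_eqI[of _ _ "swp x"]) (simp add: swp_inv, auto simp: swp_def ref_triangle_def)
  ultimately show ?thesis by blast
qed

lemma shg_im: "shg ` ref_triangle = ref_triangle"
proof -
  have "shg ` ref_triangle \<subseteq> ref_triangle" for dummy::bool
    by (auto simp: shg_def shL_def ref_triangle_def)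
  moreover have "x \<in> shg ` ref_triangle" if "x \<in> ref_triangle" for x
    using that by (intro image_eqI[of _ _ "shg x"]) (simp add: shg_inv, auto simp: shg_def shL_def ref_triangle_def)
  ultimately show ?thesis by blast
qed

lemma der_swp: "(swp has_derivative swp) (at x)"
  using lin_swp linear_imp_has_derivative by blast
lemma der_shg: "(shg has_derivative shL) (at x)"
proof -
  have "((\<lambda>x. (\<chi> i. if i = 1 then 1 else 0) + shL x) has_derivative (\<lambda>h. 0 + shL h)) (at x)"
    by (intro has_derivative_add has_derivative_const linear_imp_has_derivative lin_shL)
  then show ?thesis by (simp add: shg_def[abs_def])
qed

definition areaT where "areaT = integral ref_triangle (\<lambda>_. 1::real)"

lemma areaT_pos: "areaT > 0"
proof -
  have sub: "cbox 0 (vec (1/2) :: real^2) \<subseteq> ref_triangle"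
  proof
    fix x :: "real^2" assume "x \<in> cbox 0 (vec (1/2) :: real^2)"
    then have "0 \<le> x$1" "x$1 \<le> 1/2" "0 \<le> x$2" "x$2 \<le> 1/2"
      unfolding mem_box_cart by (auto simp: vec_def)
    thus "x \<in> ref_triangle" by (auto simp: ref_triangle_def)
  qed
  have "integral (cbox 0 (vec (1/2) :: real^2)) (\<lambda>_. 1::real) \<le> areaT"
  proof -
    have i1: "(\<lambda>_. 1::real) integrable_on cbox 0 (vec (1/2) :: real^2)" by (rule integrable_const)
    have i2: "(\<lambda>_. 1::real) integrable_on ref_triangle" by (rule int_T) (rule continuous_on_const)
    show ?thesis using integral_subset_le[OF sub i1 i2] by (simp add: areaT_def)
  qed
  moreover have "integral (cbox 0 (vec (1/2) :: real^2)) (\<lambda>_. 1::real) = 1/4"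
  proof -
    have z: "(0::real^2) \<in> cbox 0 (vec (1/2))" by (simp add: mem_box_cart)
    have ne: "cbox 0 (vec (1/2) :: real^2) \<noteq> {}" using z by blast
    have "Henstock_Kurzweil_Integration.content (cbox 0 (vec (1/2) :: real^2)) = (1/2)^2"
      by (subst content_cbox_cart[OF ne]) simp
    thus ?thesis by (simp add: power2_eq_square)
  qed
  ultimately show ?thesis by simp
qed

lemma iT1: "(\<lambda>y::real^2. y$1) integrable_on ref_triangle"
  by (rule int_T) (intro continuous_intros)
lemma iT2: "(\<lambda>y::real^2. y$2) integrable_on ref_triangle"
  by (rule int_T) (intro continuous_intros)
lemma iTc: "(\<lambda>y::real^2. c::real) integrable_on ref_triangle"
  by (rule int_T) (intro continuous_intros)

lemma intT_1: "integral ref_triangle (\<lambda>y. y$1) = areaT / 3" and intT_2: "integral ref_triangle (\<lambda>y. y$2) = areaT / 3"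
proof -
  have c1: "continuous_on ref_triangle (\<lambda>y::real^2. y$1)"
    by (intro continuous_intros)
  have e1: "integral ref_triangle (\<lambda>y. (swp y)$1) = integral ref_triangle (\<lambda>y. y$1)"
    by (rule cov_T[OF der_swp det_swp swp_inv swp_im c1])
  have e2: "integral ref_triangle (\<lambda>y. (shg y)$1) = integral ref_triangle (\<lambda>y. y$1)"
    by (rule cov_T[OF der_shg det_shL shg_inv shg_im c1])
  have "integral ref_triangle (\<lambda>y. (shg y)$1) = integral ref_triangle (\<lambda>y. (1 - y$1) - y$2)"
    by (simp add: shg_def shL_def algebra_simps)
  also have "\<dots> = integral ref_triangle (\<lambda>y. 1 - y$1) - integral ref_triangle (\<lambda>y. y$2)"
    by (rule integral_diff[OF integrable_diff[OF iTc iT1] iT2])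
  also have "integral ref_triangle (\<lambda>y. 1 - y$1) = areaT - integral ref_triangle (\<lambda>y. y$1)"
    unfolding areaT_def by (rule integral_diff[OF iTc iT1])
  finally have "areaT - integral ref_triangle (\<lambda>y. y$1) - integral ref_triangle (\<lambda>y. y$2) = integral ref_triangle (\<lambda>y. y$1)"
    using e2 by simp
  moreover have "integral ref_triangle (\<lambda>y. y$2) = integral ref_triangle (\<lambda>y. y$1)"
    using e1 by (simp add: swp_def)
  ultimately show "integral ref_triangle (\<lambda>y. y$1) = areaT / 3" "integral ref_triangle (\<lambda>y. y$2) = areaT / 3"
    by linarith+
qed

lemma intT_aff: "integral ref_triangle (\<lambda>y. u + y$1 * a + y$2 * b) = areaT / 3 * (u + (u + a) + (u + b))"
proof -
  have j1: "(\<lambda>y::real^2. y$1 * a) integrable_on ref_triangle" using integrable_on_mult_left[OF iT1] by simp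
  have j2: "(\<lambda>y::real^2. y$2 * b) integrable_on ref_triangle" using integrable_on_mult_left[OF iT2] by simp
  have "integral ref_triangle (\<lambda>y. u + y$1 * a + y$2 * b)
      = integral ref_triangle (\<lambda>y. u + y$1 * a) + integral ref_triangle (\<lambda>y. y$2 * b)"
    by (rule integral_add[OF integrable_add[OF iTc j1] j2])
  also have "integral ref_triangle (\<lambda>y. u + y$1 * a) = integral ref_triangle (\<lambda>y. u) + integral ref_triangle (\<lambda>y. y$1 * a)"
    by (rule integral_add[OF iTc j1])
  also have "integral ref_triangle (\<lambda>y. y$1 * a) = integral ref_triangle (\<lambda>y. y$1) * a"
    by (rule integral_mult_left)
  also have "integral ref_triangle (\<lambda>y. y$2 * b) = integral ref_triangle (\<lambda>y. y$2) * b"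
    by (rule integral_mult_left)
  also have "integral ref_triangle (\<lambda>y. u) = u * areaT"
  proof -
    have "integral ref_triangle (\<lambda>y. u) = integral ref_triangle (\<lambda>y. u * 1)" by simp
    also have "\<dots> = u * areaT" unfolding areaT_def by (rule integral_mult_right)
    finally show ?thesis .
  qed
  finally show ?thesis by (simp add: intT_1 intT_2 algebra_simps)
qed



definition qf :: "real \<Rightarrow> real^3 \<Rightarrow> real^3^3 \<Rightarrow> real^3 \<Rightarrow> real" where
  "qf c b A x = c + b \<bullet> x + x \<bullet> (A *v x)"
definition Bf :: "real \<Rightarrow> real^3 \<Rightarrow> real^3^3 \<Rightarrow> real^3 \<Rightarrow> real^3 \<Rightarrow> real" where
  "Bf c b A y z = c + (b \<bullet> y + b \<bullet> z) / 2 + y \<bullet> (A *v z)"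

lemma P2_iff: "p \<in> P2 \<longleftrightarrow> (\<exists>c b A. \<forall>x. p x = qf c b A x)"
proof -
  have e1: "(\<Sum>k\<in>UNIV. b$k * x$k) = b \<bullet> x" for b x :: "real^3"
    by (simp add: inner_vec_def)
  have e2: "(\<Sum>k\<in>UNIV. \<Sum>l\<in>UNIV. A$k$l * x$k * x$l) = x \<bullet> (A *v x)" for A :: "real^3^3" and x
    by (simp add: inner_vec_def matrix_vector_mult_def sum_distrib_left mult_ac)
  show ?thesis unfolding P2_def qf_def e1 e2 by simp
qed

lemma qf_two: "qf c b A ((1-t) *\<^sub>R y + t *\<^sub>R z) =
   (1-t) * qf c b A y + t * qf c b A z + t * (1-t) * (Bf c b A y z + Bf c b A z y - qf c b A y - qf c b A z)"
  by (simp add: qf_def Bf_def inner_add_left inner_add_right matrix_vector_right_distrib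
      matrix_vector_mult_scaleR algebra_simps)

lemma Bf_diag: "Bf c b A y y = qf c b A y"
  by (simp add: qf_def Bf_def)

lemma qf_sum:
  assumes "finite I" "sum l I = 1"
  shows "qf c b A (\<Sum>i\<in>I. l i *\<^sub>R w i) = (\<Sum>i\<in>I. \<Sum>j\<in>I. l i * l j * Bf c b A (w i) (w j))"
proof -
  have s1: "(\<Sum>i\<in>I. \<Sum>j\<in>I. l i * l j * c) = c"
    using assms by (simp add: sum_distrib_left[symmetric] sum_distrib_right[symmetric])
  have s2: "(\<Sum>i\<in>I. \<Sum>j\<in>I. l i * l j * (b \<bullet> w i)) = b \<bullet> (\<Sum>i\<in>I. l i *\<^sub>R w i)"
  proof -
    have "(\<Sum>i\<in>I. \<Sum>j\<in>I. l i * l j * (b \<bullet> w i)) = (\<Sum>i\<in>I. l i * (b \<bullet> w i) * (\<Sum>j\<in>I. l j))"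
      by (rule sum.cong[OF refl]) (simp add: sum_distrib_left sum_distrib_right mult_ac)
    also have "\<dots> = (\<Sum>i\<in>I. l i * (b \<bullet> w i))" using assms by simp
    also have "\<dots> = b \<bullet> (\<Sum>i\<in>I. l i *\<^sub>R w i)" by (simp add: inner_sum_right)
    finally show ?thesis .
  qed
  have s3: "(\<Sum>i\<in>I. \<Sum>j\<in>I. l i * l j * (b \<bullet> w j)) = b \<bullet> (\<Sum>i\<in>I. l i *\<^sub>R w i)"
    using s2 by (subst sum.swap) (simp add: mult_ac)
  have s4: "(\<Sum>i\<in>I. \<Sum>j\<in>I. l i * l j * (w i \<bullet> (A *v w j))) = 
       (\<Sum>i\<in>I. l i *\<^sub>R w i) \<bullet> (A *v (\<Sum>i\<in>I. l i *\<^sub>R w i))"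
    apply (simp add: inner_sum_left inner_sum_right vec.sum matrix_vector_mult_scaleR sum_distrib_left mult_ac)
    apply (subst sum.swap)
    apply (simp add: mult_ac)
    done
  have sm: "l i * l j * Bf c b A (w i) (w j) = l i * l j * c + l i * l j * (b \<bullet> w i) / 2 + l i * l j * (b \<bullet> w j) / 2
      + l i * l j * (w i \<bullet> (A *v w j))" for i j
    by (simp add: Bf_def algebra_simps add_divide_distrib)
  have "(\<Sum>i\<in>I. \<Sum>j\<in>I. l i * l j * Bf c b A (w i) (w j)) =
     (\<Sum>i\<in>I. \<Sum>j\<in>I. l i * l j * c) + (\<Sum>i\<in>I. \<Sum>j\<in>I. l i * l j * (b \<bullet> w i)) / 2 + (\<Sum>i\<in>I. \<Sum>j\<in>I. l i * l j * (b \<bullet> w j)) / 2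
     + (\<Sum>i\<in>I. \<Sum>j\<in>I. l i * l j * (w i \<bullet> (A *v w j)))"
    unfolding sm sum.distrib sum_divide_distrib ..
  also have "\<dots> = qf c b A (\<Sum>i\<in>I. l i *\<^sub>R w i)"
    unfolding s1 s2 s3 s4 qf_def by simp
  finally show ?thesis by simp
qed

lemma aff_sum:
  fixes B :: "'a \<Rightarrow> 'a \<Rightarrow> real"
  assumes "finite I" "sum l I = 1" "\<And>i j. i \<in> I \<Longrightarrow> j \<in> I \<Longrightarrow> B i j + B j i = B i i + B j j"
  shows "(\<Sum>i\<in>I. \<Sum>j\<in>I. l i * l j * B i j) = (\<Sum>i\<in>I. l i * B i i)"
proof -
  have "2 * (\<Sum>i\<in>I. \<Sum>j\<in>I. l i * l j * B i j) = (\<Sum>i\<in>I. \<Sum>j\<in>I. l i * l j * B i j) + (\<Sum>i\<in>I. \<Sum>j\<in>I. l i * l j * B j i)"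
    by (subst (2) sum.swap) (simp add: mult_ac)
  also have "\<dots> = (\<Sum>i\<in>I. \<Sum>j\<in>I. l i * l j * (B i j + B j i))"
    by (simp add: sum.distrib algebra_simps)
  also have "\<dots> = (\<Sum>i\<in>I. \<Sum>j\<in>I. l i * l j * (B i i + B j j))"
    using assms(3) by (intro sum.cong refl) auto
  also have "\<dots> = (\<Sum>i\<in>I. \<Sum>j\<in>I. l j * (l i * B i i)) + (\<Sum>i\<in>I. \<Sum>j\<in>I. l i * (l j * B j j))"
    by (simp add: sum.distrib algebra_simps)
  also have "\<dots> = 2 * (\<Sum>i\<in>I. l i * B i i)"
    using assms(2) by (subst (2) sum.swap) (simp add: sum_distrib_right[symmetric])
  finally show ?thesis by simp
qed



lemma set14: "{1..4::nat} = {1,2,3,4}" by auto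

lemma bary:
  fixes v :: "nat \<Rightarrow> real^3"
  assumes inj: "inj_on v {1..4}" and ind: "\<not> affine_dependent (v ` {1..4})"
  obtains lam :: "nat \<Rightarrow> real^3 \<Rightarrow> real" where
    "\<And>k. \<exists>d e. \<forall>x. lam k x = d + e \<bullet> x"
    "\<And>k m. k \<in> {1..4} \<Longrightarrow> m \<in> {1..4} \<Longrightarrow> lam k (v m) = (if k = m then 1 else 0)"
    "\<And>x. (\<Sum>k\<in>{1..4}. lam k x) = 1"
    "\<And>x. (\<Sum>k\<in>{1..4}. lam k x *\<^sub>R v k) = x"
proof -
  define M :: "real^3^3" where
    "M = (\<chi> r c. (if c = 1 then v 2 - v 1 else if c = 2 then v 3 - v 1 else v 4 - v 1) $ r)"
  have Mv: "M *v y = y$1 *\<^sub>R (v 2 - v 1) + y$2 *\<^sub>R (v 3 - v 1) + y$3 *\<^sub>R (v 4 - v 1)" for y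
    by (simp add: M_def matrix_vector_mult_def vec_eq_iff sum_3 algebra_simps)
  have d: "v 1 \<noteq> v 2" "v 1 \<noteq> v 3" "v 1 \<noteq> v 4" "v 2 \<noteq> v 3" "v 2 \<noteq> v 4" "v 3 \<noteq> v 4"
  proof -
    have D: "\<And>a b. a \<in> {1..4} \<Longrightarrow> b \<in> {1..4} \<Longrightarrow> a \<noteq> b \<Longrightarrow> v a \<noteq> v b"
      using inj unfolding inj_on_def by blast
    show "v 1 \<noteq> v 2" "v 1 \<noteq> v 3" "v 1 \<noteq> v 4" "v 2 \<noteq> v 3" "v 2 \<noteq> v 4" "v 3 \<noteq> v 4"
      by (rule D; simp)+
  qed
  have V: "v ` {1..4} = {v 1, v 2, v 3, v 4}" unfolding set14 by simp
  have ker: "y = 0" if "M *v y = 0" for y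
  proof (rule ccontr)
    assume "y \<noteq> 0"
    then obtain c where c: "y $ c \<noteq> 0" by (auto simp: vec_eq_iff)
    define U where "U p = (if p = v 1 then - (y$1 + y$2 + y$3) else if p = v 2 then y$1 else if p = v 3 then y$2 else y$3)" for p
    have "affine_dependent (v ` {1..4})"
      unfolding affine_dependent_explicit_finite[OF finite_imageI[OF finite_atLeastAtMost]]
    proof (intro exI[of _ U] conjI)
      show "sum U (v ` {1..4}) = 0" unfolding V using d by (simp add: U_def)
      show "\<exists>p\<in>v ` {1..4}. U p \<noteq> 0" unfolding V
        using d c exhaust_3[of c] by (auto simp: U_def)
      have "(\<Sum>p\<in>v ` {1..4}. U p *\<^sub>R p) = M *v y" unfolding V Mv using d
        by (simp add: U_def algebra_simps)
      thus "(\<Sum>p\<in>v ` {1..4}. U p *\<^sub>R p) = 0" using that by simp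
    qed
    thus False using ind by simp
  qed
  obtain B where BM: "B ** M = mat 1" using ker matrix_left_invertible_ker by blast
  have MB: "M ** B = mat 1" using BM matrix_left_right_inverse by blast
  define mu where "mu x = B *v (x - v 1)" for x
  define lam :: "nat \<Rightarrow> real^3 \<Rightarrow> real" where "lam k x = (if k = 1 then 1 - (mu x$1 + mu x$2 + mu x$3) else if k = 2 then mu x$1
      else if k = 3 then mu x$2 else mu x$3)" for k x
  have muc: "mu x $ c = - (B$c \<bullet> v 1) + B$c \<bullet> x" for x c
    by (simp add: mu_def matrix_vector_mul_component inner_diff_right)
  have L1: "\<exists>d e. \<forall>x. lam k x = d + e \<bullet> x" for k
  proof -
    consider "k = 1" | "k = 2" | "k = 3" | "k \<noteq> 1 \<and> k \<noteq> 2 \<and> k \<noteq> 3" by blast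
    then show ?thesis
    proof cases
      case 1 show ?thesis
        by (rule exI[of _ "1 + (B$1 \<bullet> v 1 + B$2 \<bullet> v 1 + B$3 \<bullet> v 1)"], rule exI[of _ "- (B$1 + B$2 + B$3)"])
          (simp add: lam_def 1 muc inner_add_left inner_diff_left)
    next
      case 2 show ?thesis
        by (rule exI[of _ "- (B$1 \<bullet> v 1)"], rule exI[of _ "B$1"]) (simp add: lam_def 2 muc)
    next
      case 3 show ?thesis
        by (rule exI[of _ "- (B$2 \<bullet> v 1)"], rule exI[of _ "B$2"]) (simp add: lam_def 3 muc)
    next
      case 4 show ?thesis
        by (rule exI[of _ "- (B$3 \<bullet> v 1)"], rule exI[of _ "B$3"]) (use 4 in \<open>auto simp: lam_def muc\<close>)
    qed
  qed
  have BMv: "B *v (M *v y) = y" for y by (simp add: matrix_vector_mul_assoc BM)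
  have mu1: "mu (v 1) = 0" by (simp add: mu_def)
  have mu2: "mu (v 2) = axis 1 1"
  proof -
    have "v 2 - v 1 = M *v axis 1 1" by (simp add: Mv axis_def)
    thus ?thesis by (simp add: mu_def BMv)
  qed
  have mu3: "mu (v 3) = axis 2 1"
  proof -
    have "v 3 - v 1 = M *v axis 2 1" by (simp add: Mv axis_def)
    thus ?thesis by (simp add: mu_def BMv)
  qed
  have mu4: "mu (v 4) = axis 3 1"
  proof -
    have "v 4 - v 1 = M *v axis 3 1" by (simp add: Mv axis_def)
    thus ?thesis by (simp add: mu_def BMv)
  qed
  have L2: "lam k (v m) = (if k = m then 1 else 0)" if "k \<in> {1..4}" "m \<in> {1..4}" for k m
    using that unfolding set14
    apply (simp only: insert_iff empty_iff simp_thms)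
    apply (elim disjE)
    apply (simp_all add: lam_def mu1 mu1[unfolded One_nat_def] mu2 mu3 mu4 axis_def)
    done
  have L3: "(\<Sum>k\<in>{1..4}. lam k x) = 1" for x
    unfolding set14 by (simp add: lam_def)
  have L4: "(\<Sum>k\<in>{1..4}. lam k x *\<^sub>R v k) = x" for x
  proof -
    have "M *v mu x = x - v 1" by (simp add: mu_def matrix_vector_mul_assoc MB)
    hence e: "mu x$1 *\<^sub>R (v 2 - v 1) + mu x$2 *\<^sub>R (v 3 - v 1) + mu x$3 *\<^sub>R (v 4 - v 1) = x - v 1"
      by (simp add: Mv)
    have "(\<Sum>k\<in>{1..4}. lam k x *\<^sub>R v k) = v 1 + (mu x$1 *\<^sub>R (v 2 - v 1) + mu x$2 *\<^sub>R (v 3 - v 1) + mu x$3 *\<^sub>R (v 4 - v 1))"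
      unfolding set14 by (simp add: lam_def algebra_simps)
    also have "\<dots> = x" unfolding e by simp
    finally show ?thesis .
  qed
  show ?thesis using that[OF L1 L2 L3 L4] .
qed



lemma face1: "face_mean v 1 p = triangle_mean p (v 2) (v 3) (v 4)"
proof -
  have "{1..4::nat} - {1} = {2,3,4}" by auto
  thus ?thesis by (simp add: face_mean_def)
qed
lemma face2: "face_mean v 2 p = triangle_mean p (v 1) (v 3) (v 4)"
proof -
  have "{1..4::nat} - {2} = {1,3,4}" by auto
  thus ?thesis by (simp add: face_mean_def)
qed
lemma face3: "face_mean v 3 p = triangle_mean p (v 1) (v 2) (v 4)"
proof -
  have "{1..4::nat} - {3} = {1,2,4}" by auto
  thus ?thesis by (simp add: face_mean_def)
qed
lemma face4: "face_mean v 4 p = triangle_mean p (v 1) (v 2) (v 3)"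
proof -
  have "{1..4::nat} - {4} = {1,2,3}" by auto
  thus ?thesis by (simp add: face_mean_def)
qed

lemma intg_w:
  fixes w g :: "real \<Rightarrow> real"
  assumes "w integrable_on {0..1}" "\<And>t. t \<in> {0..1} \<Longrightarrow> 0 \<le> w t" "continuous_on {0..1} g"
  shows "(\<lambda>t. g t * w t) integrable_on {0..1}"
proof -
  have "w absolutely_integrable_on {0..1}" by (rule nonnegative_absolutely_integrable_1[OF assms(1,2)])
  moreover have "g \<in> borel_measurable (lebesgue_on {0..1})"
    by (rule continuous_imp_measurable_on_sets_lebesgue[OF assms(3)]) simp
  moreover have "bounded (g ` {0..1})"
    by (rule compact_imp_bounded[OF compact_continuous_image[OF assms(3)]]) simp
  ultimately have "(\<lambda>t. g t * w t) absolutely_integrable_on {0..1}"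
    by (intro absolutely_integrable_bounded_measurable_product_real) auto
  thus ?thesis using set_lebesgue_integral_eq_integral(1) by blast
qed

lemma edge_lemma:
  fixes w :: "real \<Rightarrow> real" and Q :: "real poly"
  assumes wi: "(w has_integral 1) {0..1}" and wn: "\<And>t. t\<in>{0..1} \<Longrightarrow> 0 \<le> w t"
    and orth: "\<And>a b. integral {0..1} (\<lambda>t. poly Q t * (a + b*t) * w t) = 0"
    and P: "\<And>t. t \<in> {0..1} \<Longrightarrow> P t = a0 + a1*t + \<beta>*(t*(1-t))"
  shows "integral {0..1} (\<lambda>t. P t * poly Q t * w t) = \<beta> * integral {0..1} (\<lambda>t. t*(1-t)*poly Q t * w t)"
proof -
  have wI: "w integrable_on {0..1}" using wi by blast
  have i1: "(\<lambda>t. (poly Q t * (a0 + a1*t)) * w t) integrable_on {0..1}"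
    by (rule intg_w[OF wI wn]) (auto intro!: continuous_intros)
  have i2: "(\<lambda>t. (t*(1-t)*poly Q t) * w t) integrable_on {0..1}"
    by (rule intg_w[OF wI wn]) (auto intro!: continuous_intros)
  have "integral {0..1} (\<lambda>t. P t * poly Q t * w t) =
        integral {0..1} (\<lambda>t. (poly Q t * (a0 + a1*t)) * w t + \<beta> * ((t*(1-t)*poly Q t) * w t))"
    by (rule integral_cong) (simp add: P algebra_simps)
  also have "\<dots> = integral {0..1} (\<lambda>t. (poly Q t * (a0 + a1*t)) * w t) + integral {0..1} (\<lambda>t. \<beta> * ((t*(1-t)*poly Q t) * w t))"
    by (rule integral_add[OF i1 integrable_on_mult_right[OF i2]])
  also have "integral {0..1} (\<lambda>t. \<beta> * ((t*(1-t)*poly Q t) * w t)) = \<beta> * integral {0..1} (\<lambda>t. (t*(1-t)*poly Q t) * w t)"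
    by (rule integral_mult_right)
  also have "integral {0..1} (\<lambda>t. (poly Q t * (a0 + a1*t)) * w t) = 0" using orth by simp
  finally show ?thesis by simp
qed

lemma tri_int:
  fixes f :: "real^3 \<Rightarrow> real"
  assumes "continuous_on UNIV f"
  shows "(\<lambda>y. f (a + y$1 *\<^sub>R (b-a) + y$2 *\<^sub>R (c-a))) integrable_on ref_triangle"
  by (rule int_T, rule continuous_on_compose2[OF assms]) (auto intro!: continuous_intros)

lemma tri_mean_add:
  fixes f g :: "real^3 \<Rightarrow> real"
  assumes "continuous_on UNIV f" "continuous_on UNIV g"
  shows "triangle_mean (\<lambda>x. f x + g x) a b c = triangle_mean f a b c + triangle_mean g a b c"
  unfolding triangle_mean_def
  by (subst integral_add[OF tri_int[OF assms(1)] tri_int[OF assms(2)]]) (simp add: distrib_left)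

lemma tri_mean_aff:
  assumes "\<And>s u. p (a + s *\<^sub>R (b-a) + u *\<^sub>R (c-a)) = p a + s*(p b - p a) + u*(p c - p a)"
  shows "triangle_mean p a b c = 2*areaT/3*(p a + p b + p c)"
proof -
  have "triangle_mean p a b c = 2 * integral ref_triangle (\<lambda>y. p a + y$1 * (p b - p a) + y$2 * (p c - p a))"
    unfolding triangle_mean_def assms by (simp add: mult_ac)
  also have "\<dots> = 2*areaT/3*(p a + p b + p c)" unfolding intT_aff by (simp add: algebra_simps)
  finally show ?thesis .
qed

lemma affine_comb2:
  assumes "\<forall>x. f x = d + e \<bullet> x"
  shows "f ((1-t) *\<^sub>R y + t *\<^sub>R z) = (1-t) * f y + t * f z"
  using assms by (simp add: inner_add_right algebra_simps)

lemma affine_comb3: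
  assumes "\<forall>x. f x = d + e \<bullet> x"
  shows "f (a + s *\<^sub>R (b-a) + u *\<^sub>R (c-a)) = f a + s*(f b - f a) + u*(f c - f a)"
  using assms by (simp add: inner_add_right inner_diff_right algebra_simps)

lemma qf_aff3:
  assumes h: "Bf c0 b A x y + Bf c0 b A y x = qf c0 b A x + qf c0 b A y"
     "Bf c0 b A x z + Bf c0 b A z x = qf c0 b A x + qf c0 b A z"
     "Bf c0 b A y z + Bf c0 b A z y = qf c0 b A y + qf c0 b A z"
  shows "qf c0 b A (x + s *\<^sub>R (y-x) + u *\<^sub>R (z-x)) = qf c0 b A x + s*(qf c0 b A y - qf c0 b A x) + u*(qf c0 b A z - qf c0 b A x)"
proof -
  define w :: "nat \<Rightarrow> real^3" where "w i = (if i = 0 then x else if i = 1 then y else z)" for i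
  define l :: "nat \<Rightarrow> real" where "l i = (if i = 0 then 1 - s - u else if i = 1 then s else u)" for i
  have I: "finite {0,1,2::nat}" "sum l {0,1,2} = 1" by (auto simp: l_def)
  have pt: "x + s *\<^sub>R (y-x) + u *\<^sub>R (z-x) = (\<Sum>i\<in>{0,1,2}. l i *\<^sub>R w i)"
    by (simp add: l_def w_def algebra_simps)
  have H: "Bf c0 b A (w i) (w j) + Bf c0 b A (w j) (w i) = Bf c0 b A (w i) (w i) + Bf c0 b A (w j) (w j)"
    if "i \<in> {0,1,2}" "j \<in> {0,1,2}" for i j
    using that h by (auto simp: w_def Bf_diag algebra_simps)
  have "qf c0 b A (x + s *\<^sub>R (y-x) + u *\<^sub>R (z-x)) = (\<Sum>i\<in>{0,1,2}. l i * Bf c0 b A (w i) (w i))"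
    unfolding pt qf_sum[OF I] by (rule aff_sum[OF I H])
  also have "\<dots> = qf c0 b A x + s*(qf c0 b A y - qf c0 b A x) + u*(qf c0 b A z - qf c0 b A x)"
    by (simp add: l_def w_def Bf_diag algebra_simps)
  finally show ?thesis .
qed



lemma sum_delta2:
  fixes a :: "nat \<Rightarrow> real"
  assumes "finite I" "m \<in> I" "n \<in> I"
  shows "(\<Sum>l\<in>I. a l * ((1-t)*(if l = m then 1 else 0) + t*(if l = n then 1 else 0))) = (1-t)*a m + t*a n"
proof -
  have "(\<Sum>l\<in>I. a l * ((1-t)*(if l = m then 1 else 0) + t*(if l = n then 1 else 0)))
      = (\<Sum>l\<in>I. (1-t) * (if l = m then a l else 0) + t * (if l = n then a l else 0))"
    by (rule sum.cong) (auto simp: algebra_simps)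
  also have "\<dots> = (1-t) * (\<Sum>l\<in>I. (if l = m then a l else 0)) + t * (\<Sum>l\<in>I. (if l = n then a l else 0))"
    by (simp add: sum.distrib sum_distrib_left)
  also have "\<dots> = (1-t)*a m + t*a n" using assms by simp
  finally show ?thesis .
qed

lemma sum_delta1:
  fixes a :: "nat \<Rightarrow> real"
  assumes "finite I" "m \<in> I"
  shows "(\<Sum>l\<in>I. a l * (if l = m then 1 else 0)) = a m"
proof -
  have "(\<Sum>l\<in>I. a l * (if l = m then 1 else 0)) = (\<Sum>l\<in>I. (if l = m then a l else 0))"
    by (rule sum.cong) auto
  thus ?thesis using assms by simp
qed

lemma outer_quad:
  fixes e f x :: "real^3"
  shows "x \<bullet> ((\<chi> k l. e$k * f$l) *v x) = (e \<bullet> x) * (f \<bullet> x)"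
  apply (simp add: inner_vec_def matrix_vector_mult_def sum_product sum_distrib_left mult_ac)
  apply (subst sum.swap)
  apply (simp add: mult_ac)
  done



lemma cont_aff: "\<forall>x. f x = d + e \<bullet> x \<Longrightarrow> continuous_on UNIV (f :: real^3 \<Rightarrow> real)"
proof -
  assume "\<forall>x. f x = d + e \<bullet> x"
  hence "f = (\<lambda>x. d + e \<bullet> x)" by auto
  thus ?thesis by (auto intro!: continuous_intros)
qed

lemma dir_suff:
  fixes v :: "nat \<Rightarrow> real^3"
    and \<omega> :: "nat \<Rightarrow> nat \<Rightarrow> real \<Rightarrow> real"
    and q :: "nat \<Rightarrow> nat \<Rightarrow> real poly"
  assumes nondeg: "inj_on v {1..4}" "\<not> affine_dependent (v ` {1..4})"
    and dens_nonneg: "\<And>i j t. 1 \<le> i \<Longrightarrow> i < j \<Longrightarrow> j \<le> 4 \<Longrightarrow> t \<in> {0..1} \<Longrightarrow> 0 \<le> \<omega> i j t"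
    and dens_int: "\<And>i j. 1 \<le> i \<Longrightarrow> i < j \<Longrightarrow> j \<le> 4 \<Longrightarrow> (\<omega> i j has_integral 1) {0..1}"
    and q_orth: "\<And>i j a b. 1 \<le> i \<Longrightarrow> i < j \<Longrightarrow> j \<le> 4 \<Longrightarrow>
                   integral {0..1} (\<lambda>t. poly (q i j) t * (a + b * t) * \<omega> i j t) = 0"
    and Cnz: "\<forall>i j. 1 \<le> i \<and> i < j \<and> j \<le> 4 \<longrightarrow>
            integral {0..1} (\<lambda>t. t * (1 - t) * poly (q i j) t * \<omega> i j t) \<noteq> 0"
  shows "unisolvent_ef v \<omega> q"
  unfolding unisolvent_ef_def
proof (intro ballI impI)
  obtain lam :: "nat \<Rightarrow> real^3 \<Rightarrow> real" where
    L1: "\<And>k. \<exists>d e. \<forall>x. lam k x = d + e \<bullet> x" and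
    L2: "\<And>k m. k \<in> {1..4} \<Longrightarrow> m \<in> {1..4} \<Longrightarrow> lam k (v m) = (if k = m then 1 else 0)" and
    L3: "\<And>x. (\<Sum>k\<in>{1..4}. lam k x) = 1" and
    L4: "\<And>x. (\<Sum>k\<in>{1..4}. lam k x *\<^sub>R v k) = x"
    using bary[OF nondeg] by blast
  fix p x
  assume pP: "p \<in> P2" and
    Z: "(\<forall>j\<in>{1..4}. face_mean v j p = 0) \<and>
        (\<forall>i j. 1 \<le> i \<and> i < j \<and> j \<le> 4 \<longrightarrow> edge_fun v (\<omega> i j) (q i j) i j p = 0)"
    and x: "x \<in> convex hull v ` {1..4}"
  obtain c0 b A where pq: "\<And>x. p x = qf c0 b A x" using pP unfolding P2_iff by blast
  define P where "P m = p (v m)" for m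
  define Bv where "Bv m n = Bf c0 b A (v m) (v n)" for m n
  have beta_lt: "Bv m n + Bv n m = P m + P n" if "1 \<le> m" "m < n" "n \<le> 4" for m n
  proof -
    define \<beta> where "\<beta> = Bv m n + Bv n m - P m - P n"
    have "edge_fun v (\<omega> m n) (q m n) m n p = \<beta> * integral {0..1} (\<lambda>t. t * (1 - t) * poly (q m n) t * \<omega> m n t)"
      unfolding edge_fun_def
    proof (rule edge_lemma[OF dens_int[OF that] _ q_orth[OF that]])
      show "\<And>t. t \<in> {0..1} \<Longrightarrow> 0 \<le> \<omega> m n t" using dens_nonneg[OF that] by blast
      show "p ((1 - t) *\<^sub>R v m + t *\<^sub>R v n) = P m + (P n - P m) * t + \<beta> * (t * (1 - t))" for t
        unfolding pq qf_two \<beta>_def Bv_def P_def by (simp add: algebra_simps)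
    qed
    moreover have "edge_fun v (\<omega> m n) (q m n) m n p = 0" using Z that by blast
    moreover have "integral {0..1} (\<lambda>t. t * (1 - t) * poly (q m n) t * \<omega> m n t) \<noteq> 0" using Cnz that by blast
    ultimately have "\<beta> = 0" by simp
    thus ?thesis unfolding \<beta>_def by simp
  qed
  have beta: "Bv m n + Bv n m = P m + P n" if "m \<in> {1..4}" "n \<in> {1..4}" for m n
  proof -
    consider "m < n" | "m = n" | "n < m" by linarith
    thus ?thesis
    proof cases
      case 1 thus ?thesis using beta_lt that by auto
    next
      case 2 thus ?thesis by (simp add: Bv_def P_def pq Bf_diag)
    next
      case 3 thus ?thesis using beta_lt[of n m] that by auto
    qed
  qed
  have Bvd: "Bv m m = P m" for m by (simp add: Bv_def P_def pq Bf_diag)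
  have tm: "triangle_mean p (v x1) (v x2) (v x3) = 2*areaT/3*(P x1 + P x2 + P x3)"
    if "x1 \<in> {1..4}" "x2 \<in> {1..4}" "x3 \<in> {1..4}" for x1 x2 x3
    unfolding P_def
  proof (rule tri_mean_aff)
    fix s u
    show "p (v x1 + s *\<^sub>R (v x2 - v x1) + u *\<^sub>R (v x3 - v x1)) = p (v x1) + s * (p (v x2) - p (v x1)) + u * (p (v x3) - p (v x1))"
      unfolding pq
      by (rule qf_aff3) (use beta that in \<open>auto simp: Bv_def P_def pq\<close>)
  qed
  have F: "face_mean v k p = 0" if "k \<in> {1..4}" for k using Z that by blast
  have e1: "P 2 + P 3 + P 4 = 0" using F[of 1] face1[of v p] tm[of 2 3 4] areaT_pos by simp
  have e2: "P 1 + P 3 + P 4 = 0" using F[of 2] face2[of v p] tm[of 1 3 4] areaT_pos by simp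
  have e3: "P 1 + P 2 + P 4 = 0" using F[of 3] face3[of v p] tm[of 1 2 4] areaT_pos by simp
  have e4: "P 1 + P 2 + P 3 = 0" using F[of 4] face4[of v p] tm[of 1 2 3] areaT_pos by simp
  have P0: "P m = 0" if "m \<in> {1..4}" for m
  proof -
    have "P 1 = 0" "P 2 = 0" "P 3 = 0" "P 4 = 0" using e1 e2 e3 e4 by linarith+
    thus ?thesis using that unfolding set14 by auto
  qed
  have "p x = qf c0 b A (\<Sum>k\<in>{1..4}. lam k x *\<^sub>R v k)" unfolding L4 pq ..
  also have "\<dots> = (\<Sum>i\<in>{1..4}. \<Sum>j\<in>{1..4}. lam i x * lam j x * Bv i j)"
    unfolding Bv_def by (rule qf_sum[OF finite_atLeastAtMost L3])
  also have "\<dots> = (\<Sum>i\<in>{1..4}. lam i x * Bv i i)"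
    by (rule aff_sum[OF finite_atLeastAtMost L3]) (simp add: Bvd beta)
  also have "\<dots> = 0" by (simp add: Bv_def Bf_diag pq[symmetric] P0[unfolded P_def])
  finally show "p x = 0" .
qed

lemma dir_nec:
  fixes v :: "nat \<Rightarrow> real^3"
    and \<omega> :: "nat \<Rightarrow> nat \<Rightarrow> real \<Rightarrow> real"
    and q :: "nat \<Rightarrow> nat \<Rightarrow> real poly"
  assumes nondeg: "inj_on v {1..4}" "\<not> affine_dependent (v ` {1..4})"
    and dens_nonneg: "\<And>i j t. 1 \<le> i \<Longrightarrow> i < j \<Longrightarrow> j \<le> 4 \<Longrightarrow> t \<in> {0..1} \<Longrightarrow> 0 \<le> \<omega> i j t"
    and dens_int: "\<And>i j. 1 \<le> i \<Longrightarrow> i < j \<Longrightarrow> j \<le> 4 \<Longrightarrow> (\<omega> i j has_integral 1) {0..1}"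
    and q_orth: "\<And>i j a b. 1 \<le> i \<Longrightarrow> i < j \<Longrightarrow> j \<le> 4 \<Longrightarrow>
                   integral {0..1} (\<lambda>t. poly (q i j) t * (a + b * t) * \<omega> i j t) = 0"
    and ij: "1 \<le> i" "i < j" "j \<le> 4"
    and C0: "integral {0..1} (\<lambda>t. t * (1 - t) * poly (q i j) t * \<omega> i j t) = 0"
  shows "\<not> unisolvent_ef v \<omega> q"
proof -
  obtain lam :: "nat \<Rightarrow> real^3 \<Rightarrow> real" where
    L1: "\<And>k. \<exists>d e. \<forall>x. lam k x = d + e \<bullet> x" and
    L2: "\<And>k m. k \<in> {1..4} \<Longrightarrow> m \<in> {1..4} \<Longrightarrow> lam k (v m) = (if k = m then 1 else 0)" and
    L3: "\<And>x. (\<Sum>k\<in>{1..4}. lam k x) = 1" and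
    L4: "\<And>x. (\<Sum>k\<in>{1..4}. lam k x *\<^sub>R v k) = x"
    using bary[OF nondeg] by blast
  obtain D E where DE: "\<And>k x. lam k x = D k + E k \<bullet> x" using L1 by metis
  have cl: "continuous_on UNIV (lam k)" for k using cont_aff DE by blast
  have iI: "i \<in> {1..4}" "j \<in> {1..4}" "i \<noteq> j" using ij by auto
  define r where "r k = face_mean v k (\<lambda>x. lam i x * lam j x)" for k
  define s where "s k = - 3 * r k / (2*areaT)" for k
  define S where "S = (s 1 + s 2 + s 3 + s 4) / 3"
  define a where "a m = S - s m" for m
  define h where "h x = (\<Sum>m\<in>{1..4}. a m * lam m x)" for x
  define p where "p x = lam i x * lam j x + h x" for x
  have haff: "\<forall>x. h x = (\<Sum>m\<in>{1..4}. a m * D m) + (\<Sum>m\<in>{1..4}. a m *\<^sub>R E m) \<bullet> x"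
    by (simp add: h_def DE inner_sum_left distrib_left sum.distrib)
  have hv: "h (v m) = a m" if "m \<in> {1..4}" for m
  proof -
    have "h (v m) = (\<Sum>l\<in>{1..4}. a l * (if l = m then 1 else 0))"
      unfolding h_def
    proof (rule sum.cong[OF refl])
      fix l :: nat assume "l \<in> {1..4}"
      thus "a l * lam l (v m) = a l * (if l = m then 1 else 0)" using L2[OF _ that] by simp
    qed
    thus ?thesis using sum_delta1[OF finite_atLeastAtMost that] by simp
  qed
  have pP: "p \<in> P2"
    unfolding P2_iff
  proof (intro exI allI)
    fix x
    show "p x = qf (D i * D j + (\<Sum>m\<in>{1..4}. a m * D m))
                   (D i *\<^sub>R E j + D j *\<^sub>R E i + (\<Sum>m\<in>{1..4}. a m *\<^sub>R E m)) (\<chi> k l. E i $ k * E j $ l) x"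
      unfolding qf_def outer_quad p_def haff[rule_format]
      by (simp add: DE inner_add_left algebra_simps)
  qed
  have edges: "edge_fun v (\<omega> m n) (q m n) m n p = 0" if mn: "1 \<le> m" "m < n" "n \<le> 4" for m n
  proof -
    have mI: "m \<in> {1..4}" "n \<in> {1..4}" using mn by auto
    have lamE: "lam l ((1-t) *\<^sub>R v m + t *\<^sub>R v n) = (1-t)*(if l = m then 1 else 0) + t*(if l = n then 1 else 0)"
      if "l \<in> {1..4}" for l t
      using affine_comb2[of "lam l" "D l" "E l" t "v m" "v n"] DE L2[OF that mI(1)] L2[OF that mI(2)] by simp
    define \<beta> where "\<beta> = (if m = i \<and> n = j then 1 else (0::real))"
    have "edge_fun v (\<omega> m n) (q m n) m n p = \<beta> * integral {0..1} (\<lambda>t. t * (1 - t) * poly (q m n) t * \<omega> m n t)"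
      unfolding edge_fun_def
    proof (rule edge_lemma[OF dens_int[OF mn] _ q_orth[OF mn]])
      show "\<And>t. t \<in> {0..1} \<Longrightarrow> 0 \<le> \<omega> m n t" using dens_nonneg[OF mn] by blast
      fix t
      have "h ((1-t) *\<^sub>R v m + t *\<^sub>R v n) = (1-t) * a m + t * a n"
        unfolding h_def using sum_delta2[OF finite_atLeastAtMost mI, of a t]
        by (simp add: lamE)
      moreover have "lam i ((1-t) *\<^sub>R v m + t *\<^sub>R v n) * lam j ((1-t) *\<^sub>R v m + t *\<^sub>R v n) = \<beta> * (t * (1 - t))"
        unfolding lamE[OF iI(1)] lamE[OF iI(2)] \<beta>_def using ij mn by (auto simp: algebra_simps)
      ultimately show "p ((1 - t) *\<^sub>R v m + t *\<^sub>R v n) = a m + (a n - a m) * t + \<beta> * (t * (1 - t))"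
        unfolding p_def by (simp add: algebra_simps)
    qed
    also have "\<dots> = 0" using C0 by (auto simp: \<beta>_def)
    finally show ?thesis .
  qed
  have tm: "triangle_mean p (v x1) (v x2) (v x3) = triangle_mean (\<lambda>x. lam i x * lam j x) (v x1) (v x2) (v x3) + 2*areaT/3*(a x1 + a x2 + a x3)"
    if "x1 \<in> {1..4}" "x2 \<in> {1..4}" "x3 \<in> {1..4}" for x1 x2 x3
  proof -
    have ch: "continuous_on UNIV h" using cont_aff haff by blast
    have "triangle_mean p (v x1) (v x2) (v x3) = triangle_mean (\<lambda>x. lam i x * lam j x) (v x1) (v x2) (v x3) + triangle_mean h (v x1) (v x2) (v x3)"
      unfolding p_def[abs_def] by (rule tri_mean_add[OF continuous_on_mult[OF cl cl] ch])
    also have "triangle_mean h (v x1) (v x2) (v x3) = 2*areaT/3*(h (v x1) + h (v x2) + h (v x3))"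
      by (rule tri_mean_aff) (rule affine_comb3[OF haff])
    finally show ?thesis using that by (simp add: hv)
  qed
  have aP: "areaT > 0" by (rule areaT_pos)
  have f1: "face_mean v 1 p = 0" using tm[of 2 3 4] unfolding face1 r_def[of 1, unfolded face1, symmetric]
    using aP by (simp add: a_def S_def s_def field_simps)
  have f2: "face_mean v 2 p = 0" using tm[of 1 3 4] unfolding face2 r_def[of 2, unfolded face2, symmetric]
    using aP by (simp add: a_def S_def s_def field_simps)
  have f3: "face_mean v 3 p = 0" using tm[of 1 2 4] unfolding face3 r_def[of 3, unfolded face3, symmetric]
    using aP by (simp add: a_def S_def s_def field_simps)
  have f4: "face_mean v 4 p = 0" using tm[of 1 2 3] unfolding face4 r_def[of 4, unfolded face4, symmetric]
    using aP by (simp add: a_def S_def s_def field_simps)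
  have faces: "\<forall>k\<in>{1..4}. face_mean v k p = 0"
    unfolding set14 using f1 f2 f3 f4 by auto
  have "\<exists>x\<in>convex hull (v ` {1..4}). p x \<noteq> 0"
  proof (cases "\<exists>m\<in>{1..4}. a m \<noteq> 0")
    case True
    then obtain m where m: "m \<in> {1..4}" "a m \<noteq> 0" by blast
    have "p (v m) = a m" unfolding p_def using L2[OF iI(1) m(1)] L2[OF iI(2) m(1)] hv[OF m(1)] iI(3) by auto
    moreover have "v m \<in> convex hull (v ` {1..4})" using m(1) by (intro hull_inc imageI)
    ultimately show ?thesis using m(2) by (intro bexI[of _ "v m"]) simp_all
  next
    case False
    define x where "x = (1 - 1/2) *\<^sub>R v i + (1/2::real) *\<^sub>R v j"
    have lx: "lam l x = (1-1/2)*(if l = i then 1 else 0) + (1/2)*(if l = j then 1 else 0)" if "l \<in> {1..4}" for l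
      unfolding x_def
      using affine_comb2[of "lam l" "D l" "E l" "1/2" "v i" "v j"] DE L2[OF that iI(1)] L2[OF that iI(2)] by simp
    have hx: "h x = 0" unfolding h_def using False by auto
    have pr: "lam i x * lam j x = 1/4"
    proof -
      have h1: "lam i x = 1/2" and h2: "lam j x = 1/2" using lx[OF iI(1)] lx[OF iI(2)] iI(3) by simp_all
      show ?thesis unfolding h1 h2 by simp
    qed
    have "p x \<noteq> 0" unfolding p_def hx pr by simp
    moreover have "x \<in> convex hull (v ` {1..4})"
      unfolding x_def
      by (rule convexD[OF convex_convex_hull]) (use iI in \<open>auto intro: hull_inc\<close>)
    ultimately show ?thesis by blast
  qed
  then show ?thesis
    unfolding unisolvent_ef_def using pP faces edges by blast
qed


theorem theorem4:
  fixes v :: "nat \<Rightarrow> real^3"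
    and \<omega> :: "nat \<Rightarrow> nat \<Rightarrow> real \<Rightarrow> real"
    and q :: "nat \<Rightarrow> nat \<Rightarrow> real poly"
  assumes nondeg: "inj_on v {1..4}" "\<not> affine_dependent (v ` {1..4})"
    and dens_nonneg: "\<And>i j t. 1 \<le> i \<Longrightarrow> i < j \<Longrightarrow> j \<le> 4 \<Longrightarrow> t \<in> {0..1} \<Longrightarrow> 0 \<le> \<omega> i j t"
    and dens_int: "\<And>i j. 1 \<le> i \<Longrightarrow> i < j \<Longrightarrow> j \<le> 4 \<Longrightarrow> (\<omega> i j has_integral 1) {0..1}"
    and q_deg: "\<And>i j. 1 \<le> i \<Longrightarrow> i < j \<Longrightarrow> j \<le> 4 \<Longrightarrow> degree (q i j) \<le> 2"
    and q_orth: "\<And>i j a b. 1 \<le> i \<Longrightarrow> i < j \<Longrightarrow> j \<le> 4 \<Longrightarrow>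
                   integral {0..1} (\<lambda>t. poly (q i j) t * (a + b * t) * \<omega> i j t) = 0"
  shows "unisolvent_ef v \<omega> q \<longleftrightarrow>
         (\<forall>i j. 1 \<le> i \<and> i < j \<and> j \<le> 4 \<longrightarrow>
            integral {0..1} (\<lambda>t. t * (1 - t) * poly (q i j) t * \<omega> i j t) \<noteq> 0)"
proof
  assume U: "unisolvent_ef v \<omega> q"
  show "\<forall>i j. 1 \<le> i \<and> i < j \<and> j \<le> 4 \<longrightarrow>
            integral {0..1} (\<lambda>t. t * (1 - t) * poly (q i j) t * \<omega> i j t) \<noteq> 0"
  proof (intro allI impI)
    fix i j :: nat
    assume ij: "1 \<le> i \<and> i < j \<and> j \<le> 4"
    show "integral {0..1} (\<lambda>t. t * (1 - t) * poly (q i j) t * \<omega> i j t) \<noteq> 0"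
    proof
      assume C0: "integral {0..1} (\<lambda>t. t * (1 - t) * poly (q i j) t * \<omega> i j t) = 0"
      have "\<not> unisolvent_ef v \<omega> q"
        using dir_nec[of v \<omega> q i j, OF nondeg dens_nonneg dens_int q_orth] ij C0 by blast
      thus False using U by blast
    qed
  qed
next
  assume "\<forall>i j. 1 \<le> i \<and> i < j \<and> j \<le> 4 \<longrightarrow>
            integral {0..1} (\<lambda>t. t * (1 - t) * poly (q i j) t * \<omega> i j t) \<noteq> 0"
  thus "unisolvent_ef v \<omega> q"
    using dir_suff[of v \<omega> q, OF nondeg dens_nonneg dens_int q_orth] by blast
qed

end
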